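(* Let $E$ be a Banach $f$-algebra and let $(x_n)$ be a sequence in $E$ which is disjoint ($|x_n|\wedge|x_m|=0$ for $n\neq m$) and decreasing. Then $x_n\xrightarrow{mw}0$.
   Context: All vector lattices are real and Archimedean. An $f$-algebra is a vector lattice with an associative multiplication making it an algebra, such that products of positive elements are positive and $x\wedge y=0$ implies $(xz)\wedge y=(zx)\wedge y=0$ for all $z\ge0$. A Banach $f$-algebra is an $f$-algebra which is a Banach lattice with $\|xy\|\le\|x\|\|y\|$. A net $(x_\alpha)$ in $E$ $mw$-converges to $x$ ($x_\alpha\xrightarrow{mw}x$) if $|x_\alpha-x|u\to0$ weakly for every $u\in E_+$. *)

theory Defs
  imports "HOL-Analysis.Analysis"
begin

definition lat_abs :: "'a::{lattice, ab_group_add} \<Rightarrow> 'a" where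
  "lat_abs x = sup x (- x)"

definition archimedean_vl :: "'a::{ordered_real_vector, lattice} itself \<Rightarrow> bool" where
  "archimedean_vl _ \<longleftrightarrow>
     (\<forall>x y::'a. 0 \<le> x \<longrightarrow> 0 \<le> y \<longrightarrow> (\<forall>n::nat. real n *\<^sub>R x \<le> y) \<longrightarrow> x = 0)"

definition banach_lattice_norm :: "'a::{ordered_real_vector, lattice, real_normed_vector} itself \<Rightarrow> bool" where
  "banach_lattice_norm _ \<longleftrightarrow>
     (\<forall>x y::'a. lat_abs x \<le> lat_abs y \<longrightarrow> norm x \<le> norm y)"

definition f_algebra_axioms :: "'a::{ordered_real_vector, lattice, real_algebra} itself \<Rightarrow> bool" where
  "f_algebra_axioms _ \<longleftrightarrow>
     (\<forall>x y::'a. 0 \<le> x \<longrightarrow> 0 \<le> y \<longrightarrow> 0 \<le> x * y) \<and>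
     (\<forall>x y z::'a. inf x y = 0 \<longrightarrow> 0 \<le> z \<longrightarrow> inf (x * z) y = 0 \<and> inf (z * x) y = 0)"

definition banach_f_algebra :: "'a::{banach, real_normed_algebra, ordered_real_vector, lattice} itself \<Rightarrow> bool" where
  "banach_f_algebra T \<longleftrightarrow> archimedean_vl T \<and> banach_lattice_norm T \<and> f_algebra_axioms T"

definition weakly_tendsto :: "(nat \<Rightarrow> 'a::real_normed_vector) \<Rightarrow> 'a \<Rightarrow> bool" where
  "weakly_tendsto X x \<longleftrightarrow>
     (\<forall>f::'a \<Rightarrow> real. bounded_linear f \<longrightarrow> (\<lambda>n. f (X n)) \<longlonglongrightarrow> f x)"

definition mw_tendsto :: "(nat \<Rightarrow> 'a::{real_normed_algebra, ordered_real_vector, lattice}) \<Rightarrow> 'a \<Rightarrow> bool" where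
  "mw_tendsto X x \<longleftrightarrow> (\<forall>u::'a. 0 \<le> u \<longrightarrow> weakly_tendsto (\<lambda>n. lat_abs (X n - x) * u) 0)"

end

theory Submission
  imports Defs
begin
lemma lat_abs_nonneg:
  fixes b :: "'a::{ordered_real_vector, lattice}"
  shows "0 \<le> lat_abs b"
proof -
  let ?s = "sup b (- b)"
  have "b + - b \<le> ?s + ?s" by (rule add_mono) (rule sup_ge1, rule sup_ge2)
  hence "0 \<le> ?s + ?s" by (simp only: right_minus)
  hence "0 \<le> (1/2::real) *\<^sub>R (?s + ?s)" by (rule scaleR_nonneg_nonneg[rotated]) simp
  also have "(1/2::real) *\<^sub>R (?s + ?s) = ?s"
    by (simp only: scaleR_right_distrib flip: scaleR_add_left) simp
  finally show ?thesis by (simp only: lat_abs_def)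
qed

lemma pos_of_disj:
  fixes a b :: "'a::{ordered_real_vector, lattice}"
  assumes "b \<le> a" "inf (lat_abs a) (lat_abs b) = 0"
  shows "0 \<le> a"
proof -
  have h1: "sup (- a) 0 \<le> lat_abs a"
    unfolding lat_abs_def
    by (rule sup_least, rule sup_ge2, rule lat_abs_nonneg[unfolded lat_abs_def])
  have "- a \<le> - b" using assms(1) by (rule le_imp_neg_le)
  hence "sup (- a) 0 \<le> sup (- b) 0" by (rule sup_mono) (rule order_refl)
  also have "\<dots> \<le> lat_abs b"
    unfolding lat_abs_def
    by (rule sup_least, rule sup_ge2, rule lat_abs_nonneg[unfolded lat_abs_def])
  finally have "sup (- a) 0 \<le> inf (lat_abs a) (lat_abs b)" using h1 by (intro le_infI)
  hence "sup (- a) 0 \<le> 0" by (simp only: assms(2))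
  hence "- a \<le> 0" by (rule order_trans[OF sup_ge1])
  thus ?thesis by (simp only: neg_le_0_iff_le)
qed

lemma neg_of_disj:
  fixes a b :: "'a::{ordered_real_vector, lattice}"
  assumes "b \<le> a" "inf (lat_abs a) (lat_abs b) = 0"
  shows "b \<le> 0"
proof -
  have h1: "sup b 0 \<le> lat_abs b"
    unfolding lat_abs_def
    by (rule sup_least, rule sup_ge1, rule lat_abs_nonneg[unfolded lat_abs_def])
  have "sup b 0 \<le> sup a 0" using assms(1) by (rule sup_mono) (rule order_refl)
  also have "\<dots> \<le> lat_abs a"
    unfolding lat_abs_def
    by (rule sup_least, rule sup_ge1, rule lat_abs_nonneg[unfolded lat_abs_def])
  finally have "sup b 0 \<le> inf (lat_abs a) (lat_abs b)" using h1 by (intro le_infI)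
  hence "sup b 0 \<le> 0" by (simp only: assms(2))
  thus "b \<le> 0" by (rule order_trans[OF sup_ge1])
qed

theorem lemma2p3:
  fixes x :: "nat \<Rightarrow> 'a::{banach, real_normed_algebra, ordered_real_vector, lattice}"
  assumes "banach_f_algebra TYPE('a)"
    and "\<And>n m. n \<noteq> m \<Longrightarrow> inf (lat_abs (x n)) (lat_abs (x m)) = 0"
    and "\<And>n. x (Suc n) \<le> x n"
  shows "mw_tendsto x 0"
proof -
  have z: "x n = 0" if "n \<ge> 1" for n
  proof -
    have d1: "inf (lat_abs (x n)) (lat_abs (x (Suc n))) = 0" by (rule assms(2)) simp
    have p: "0 \<le> x n" by (rule pos_of_disj[OF assms(3)[of n] d1])
    define k where "k = n - 1"
    have k: "n = Suc k" using that unfolding k_def by arith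
    have d2: "inf (lat_abs (x k)) (lat_abs (x (Suc k))) = 0" by (rule assms(2)) simp
    have "x (Suc k) \<le> 0" by (rule neg_of_disj[OF assms(3)[of k] d2])
    hence "x n \<le> 0" by (simp only: k)
    with p show ?thesis by (rule order_antisym[rotated])
  qed
  have l0: "lat_abs (0::'a) = 0" unfolding lat_abs_def by (simp only: neg_0_equal_iff_equal minus_zero sup.idem)
  show ?thesis unfolding mw_tendsto_def weakly_tendsto_def
  proof (intro allI impI)
    fix u :: 'a and f :: "'a \<Rightarrow> real"
    assume "bounded_linear f"
    have "eventually (\<lambda>n. f (lat_abs (x n - 0) * u) = f 0) sequentially"
      using eventually_ge_at_top[of 1]
      by eventually_elim (simp only: z l0 diff_zero mult_zero_left)
    thus "(\<lambda>n. f (lat_abs (x n - 0) * u)) \<longlonglongrightarrow> f 0"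
      by (rule tendsto_eventually)
  qed
qed
end
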